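(* Let $\mathcal{F}=(W,R)$ be a finite transitive frame and let $X_\mathcal{F}$ be constructed as described in the context. If $X_C$ is a T$_D$ space for every cluster $C$ of $\mathcal{F}$, then $X_\mathcal{F}$ is a T$_D$ space.
   Context: For a space $X$ and $Y\subseteq X$, $\mathrm{d}_X Y$ is the set of limit points of $Y$ ($x$ such that every set $O-\{x\}$, $O$ an open neighbourhood of $x$, meets $Y$). $X$ is T$_D$ if $\mathrm{d}_X\{x\}$ is closed for every $x\in X$. A subset $S$ is dense in $X$ if its closure is $X$, crowded in $X$ if $S\subseteq\mathrm{d}_XS$. A partition is dense (resp. crowded) if all its cells are dense (resp. crowded). For a transitive frame $(W,R)$: clusters are equivalence classes of $\{(x,y):x=y\text{ or }xRyRx\}$; the cluster of $x$ is degenerate if $x$ is irreflexive (then it is $\{x\}$), non-degenerate otherwise; $CRC'$ for clusters iff $xRy$ for representatives; $CR^\uparrow C'$ means $CRC'$ and not $C'RC$. Construction of $X_\mathcal{F}$: let $\mathscr{C}$ be the set of clusters of the finite transitive frame $\mathcal{F}$. For each $C\in\mathscr{C}$ choose a space $X_C$ with a partition $\{X_w:w\in C\}$: if $C=\{w\}$ is degenerate, $X_C=X_w=\{w\}$; if $C=\{w_1,\dots,w_k\}$ is non-degenerate, $X_C$ is a space with a crowded dense $k$-partition with cells labelled $X_{w_1},\dots,X_{w_k}$. The $X_C$ are pairwise disjoint. $X_\mathcal{F}=\bigcup_{C}X_C$, where $O\subseteq X_\mathcal{F}$ is open iff for every $C$, $O\cap X_C$ is open in $X_C$, and if $O\cap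 X_C\ne\emptyset$ then $X_{C'}\subseteq O$ for all $C'$ with $CR^\uparrow C'$. *)

theory Defs
  imports "HOL-Analysis.Analysis"
begin

definition TD_space :: "'a topology \<Rightarrow> bool" where
  "TD_space X \<longleftrightarrow> (\<forall>x\<in>topspace X. closedin X (X derived_set_of {x}))"

definition crowded_in :: "'a topology \<Rightarrow> 'a set \<Rightarrow> bool" where
  "crowded_in X S \<longleftrightarrow> S \<subseteq> X derived_set_of S"

definition dense_in :: "'a topology \<Rightarrow> 'a set \<Rightarrow> bool" where
  "dense_in X S \<longleftrightarrow> X closure_of S = topspace X"

definition finite_transitive_frame :: "'w set \<Rightarrow> ('w \<Rightarrow> 'w \<Rightarrow> bool) \<Rightarrow> bool" where
  "finite_transitive_frame W R \<longleftrightarrow> finite W \<and> (\<forall>x y. R x y \<longrightarrow> x \<in> W \<and> y \<in> W)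
     \<and> (\<forall>x y z. R x y \<longrightarrow> R y z \<longrightarrow> R x z)"

definition cluster_rel :: "'w set \<Rightarrow> ('w \<Rightarrow> 'w \<Rightarrow> bool) \<Rightarrow> 'w rel" where
  "cluster_rel W R = {(x,y). x \<in> W \<and> y \<in> W \<and> (x = y \<or> (R x y \<and> R y x))}"

definition clusters :: "'w set \<Rightarrow> ('w \<Rightarrow> 'w \<Rightarrow> bool) \<Rightarrow> 'w set set" where
  "clusters W R = W // cluster_rel W R"

definition degenerate_cluster :: "('w \<Rightarrow> 'w \<Rightarrow> bool) \<Rightarrow> 'w set \<Rightarrow> bool" where
  "degenerate_cluster R C \<longleftrightarrow> (\<exists>w. C = {w} \<and> \<not> R w w)"

definition cluster_R :: "('w \<Rightarrow> 'w \<Rightarrow> bool) \<Rightarrow> 'w set \<Rightarrow> 'w set \<Rightarrow> bool" where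
  "cluster_R R C C' \<longleftrightarrow> (\<exists>x\<in>C. \<exists>y\<in>C'. R x y)"

definition cluster_R_up :: "('w \<Rightarrow> 'w \<Rightarrow> bool) \<Rightarrow> 'w set \<Rightarrow> 'w set \<Rightarrow> bool" where
  "cluster_R_up R C C' \<longleftrightarrow> cluster_R R C C' \<and> \<not> cluster_R R C' C"

definition XC :: "('w \<Rightarrow> 'a set) \<Rightarrow> 'w set \<Rightarrow> 'a set" where
  "XC Xw C = (\<Union>w\<in>C. Xw w)"

definition XF_data :: "'w set \<Rightarrow> ('w \<Rightarrow> 'w \<Rightarrow> bool) \<Rightarrow> ('w \<Rightarrow> 'a set) \<Rightarrow> ('w set \<Rightarrow> 'a topology) \<Rightarrow> bool" where
  "XF_data W R Xw T \<longleftrightarrow>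
     (\<forall>v\<in>W. \<forall>w\<in>W. v \<noteq> w \<longrightarrow> Xw v \<inter> Xw w = {}) \<and>
     (\<forall>C\<in>clusters W R. topspace (T C) = XC Xw C \<and>
        (degenerate_cluster R C \<longrightarrow> (\<forall>w\<in>C. \<exists>p. Xw w = {p})) \<and>
        (\<not> degenerate_cluster R C \<longrightarrow>
           (\<forall>w\<in>C. Xw w \<noteq> {} \<and> crowded_in (T C) (Xw w) \<and> dense_in (T C) (Xw w))))"

definition XF :: "'w set \<Rightarrow> ('w \<Rightarrow> 'w \<Rightarrow> bool) \<Rightarrow> ('w \<Rightarrow> 'a set) \<Rightarrow> ('w set \<Rightarrow> 'a topology) \<Rightarrow> 'a topology" where
  "XF W R Xw T = topology (\<lambda>U. U \<subseteq> (\<Union>C\<in>clusters W R. XC Xw C) \<and>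
     (\<forall>C\<in>clusters W R. openin (T C) (U \<inter> XC Xw C) \<and>
        (U \<inter> XC Xw C \<noteq> {} \<longrightarrow>
           (\<forall>C'\<in>clusters W R. cluster_R_up R C C' \<longrightarrow> XC Xw C' \<subseteq> U))))"

end

theory Submission
  imports Defs
begin

lemma TD_point:
  assumes "openin X U" "x \<in> U" "U \<inter> X derived_set_of {x} = {}"
  shows "closedin X (X derived_set_of {x})"
  unfolding closedin_def
proof (intro conjI derived_set_of_subset_topspace)
  show "openin X (topspace X - X derived_set_of {x})"
  proof (subst openin_subopen, intro ballI)
    fix y assume y: "y \<in> topspace X - X derived_set_of {x}"
    show "\<exists>T. openin X T \<and> y \<in> T \<and> T \<subseteq> topspace X - X derived_set_of {x}"
    proof (cases "y = x")
      case True
      then show ?thesis using assms openin_subset by blast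
    next
      case False
      with y obtain S where S: "y \<in> S" "openin X S" "x \<notin> S"
        by (auto simp: in_derived_set_of)
      have "S \<inter> X derived_set_of {x} = {}"
        using S by (auto simp: in_derived_set_of)
      then show ?thesis using S openin_subset by blast
    qed
  qed
qed

theorem lemma4:
  fixes W :: "'w set" and R :: "'w \<Rightarrow> 'w \<Rightarrow> bool"
    and Xw :: "'w \<Rightarrow> 'a set" and T :: "'w set \<Rightarrow> 'a topology"
  assumes "finite_transitive_frame W R"
    and "XF_data W R Xw T"
    and "\<forall>C\<in>clusters W R. TD_space (T C)"
  shows "TD_space (XF W R Xw T)"
proof -
  let ?CL = "clusters W R"
  let ?up = "cluster_R_up R"
  from assms(1) have Rtr: "\<And>x y z. R x y \<Longrightarrow> R y z \<Longrightarrow> R x z"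
    unfolding finite_transitive_frame_def by blast
  from assms(2) have disjw: "\<And>v w. v\<in>W \<Longrightarrow> w\<in>W \<Longrightarrow> v\<noteq>w \<Longrightarrow> Xw v \<inter> Xw w = {}"
    unfolding XF_data_def by simp
  from assms(2) have tsp: "\<And>C. C \<in> ?CL \<Longrightarrow> topspace (T C) = XC Xw C"
    unfolding XF_data_def by simp
  have eq: "equiv W (cluster_rel W R)"
    unfolding equiv_def refl_on_def sym_def trans_def cluster_rel_def using Rtr by blast
  have CsubW: "\<And>C. C\<in>?CL \<Longrightarrow> C \<subseteq> W"
    using in_quotient_imp_subset[OF eq] unfolding clusters_def by blast
  have Cdisj: "\<And>C D. C\<in>?CL \<Longrightarrow> D\<in>?CL \<Longrightarrow> C \<noteq> D \<Longrightarrow> C \<inter> D = {}"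
    using quotient_disj[OF eq] unfolding clusters_def by blast
  have inrel: "\<And>C x y. C\<in>?CL \<Longrightarrow> x\<in>C \<Longrightarrow> y\<in>C \<Longrightarrow> x = y \<or> (R x y \<and> R y x)"
  proof -
    fix C x y assume "C\<in>?CL" "x\<in>C" "y\<in>C"
    then have "(x,y) \<in> cluster_rel W R"
      using in_quotient_imp_in_rel[OF eq] unfolding clusters_def by blast
    then show "x = y \<or> (R x y \<and> R y x)" unfolding cluster_rel_def by blast
  qed
  have XCdisj: "\<And>C D. C\<in>?CL \<Longrightarrow> D\<in>?CL \<Longrightarrow> C\<noteq>D \<Longrightarrow> XC Xw C \<inter> XC Xw D = {}"
  proof -
    fix C D assume h: "C\<in>?CL" "D\<in>?CL" "C\<noteq>D"
    show "XC Xw C \<inter> XC Xw D = {}"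
    proof (rule ccontr)
      assume "XC Xw C \<inter> XC Xw D \<noteq> {}"
      then obtain p v w where "v \<in> C" "w \<in> D" "p \<in> Xw v" "p \<in> Xw w"
        unfolding XC_def by blast
      moreover have "v \<noteq> w" using Cdisj[OF h] calculation by blast
      ultimately show False using disjw CsubW h by blast
    qed
  qed
  have Rtrans: "\<And>C D E. D\<in>?CL \<Longrightarrow> cluster_R R C D \<Longrightarrow> cluster_R R D E \<Longrightarrow> cluster_R R C E"
  proof -
    fix C D E assume D: "D\<in>?CL" and "cluster_R R C D" "cluster_R R D E"
    then obtain x y y' z where "x\<in>C" "y\<in>D" "R x y" "y'\<in>D" "z\<in>E" "R y' z"
      unfolding cluster_R_def by blast
    moreover have "R x z" using inrel[OF D \<open>y\<in>D\<close> \<open>y'\<in>D\<close>] calculation Rtr by metis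
    ultimately show "cluster_R R C E" unfolding cluster_R_def by blast
  qed
  have uptrans: "\<And>C D E. D\<in>?CL \<Longrightarrow> E\<in>?CL \<Longrightarrow> ?up C D \<Longrightarrow> ?up D E \<Longrightarrow> ?up C E"
    unfolding cluster_R_up_def using Rtrans by blast
  have upirr: "\<And>C. ?up C C \<Longrightarrow> False" unfolding cluster_R_up_def by blast
  have upasym: "\<And>C D. ?up C D \<Longrightarrow> ?up D C \<Longrightarrow> False" unfolding cluster_R_up_def by blast
  define P where "P = (\<lambda>U. U \<subseteq> (\<Union>C\<in>clusters W R. XC Xw C) \<and>
     (\<forall>C\<in>clusters W R. openin (T C) (U \<inter> XC Xw C) \<and>
        (U \<inter> XC Xw C \<noteq> {} \<longrightarrow>
           (\<forall>C'\<in>clusters W R. cluster_R_up R C C' \<longrightarrow> XC Xw C' \<subseteq> U))))"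
  have PI: "\<And>U. U \<subseteq> (\<Union>C\<in>?CL. XC Xw C) \<Longrightarrow> (\<And>C. C\<in>?CL \<Longrightarrow> openin (T C) (U \<inter> XC Xw C))
     \<Longrightarrow> (\<And>C C'. C\<in>?CL \<Longrightarrow> C'\<in>?CL \<Longrightarrow> U \<inter> XC Xw C \<noteq> {} \<Longrightarrow> ?up C C' \<Longrightarrow> XC Xw C' \<subseteq> U)
     \<Longrightarrow> P U"
    unfolding P_def by (intro conjI ballI impI) auto
  have PD1: "\<And>U. P U \<Longrightarrow> U \<subseteq> (\<Union>C\<in>?CL. XC Xw C)" unfolding P_def by auto
  have PD2: "\<And>U C. P U \<Longrightarrow> C\<in>?CL \<Longrightarrow> openin (T C) (U \<inter> XC Xw C)" unfolding P_def by auto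
  have PD3: "\<And>U C C'. P U \<Longrightarrow> C\<in>?CL \<Longrightarrow> C'\<in>?CL \<Longrightarrow> U \<inter> XC Xw C \<noteq> {} \<Longrightarrow> ?up C C'
     \<Longrightarrow> XC Xw C' \<subseteq> U" unfolding P_def by auto
  have istop: "istopology P"
    unfolding istopology_def
  proof (intro conjI allI impI)
    fix S U assume S: "P S" and U: "P U"
    show "P (S \<inter> U)"
    proof (rule PI)
      show "S \<inter> U \<subseteq> (\<Union>C\<in>?CL. XC Xw C)" using PD1[OF S] by blast
    next
      fix C assume C: "C \<in> ?CL"
      have "S \<inter> U \<inter> XC Xw C = (S \<inter> XC Xw C) \<inter> (U \<inter> XC Xw C)" by blast
      then show "openin (T C) (S \<inter> U \<inter> XC Xw C)" using PD2[OF S C] PD2[OF U C] by (metis openin_Int)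
    next
      fix C C' assume C: "C\<in>?CL" "C'\<in>?CL" "S \<inter> U \<inter> XC Xw C \<noteq> {}" "?up C C'"
      then have "S \<inter> XC Xw C \<noteq> {}" "U \<inter> XC Xw C \<noteq> {}" by blast+
      then show "XC Xw C' \<subseteq> S \<inter> U" using PD3[OF S C(1,2)] PD3[OF U C(1,2)] C(4) by blast
    qed
  next
    fix K assume K: "\<forall>S\<in>K. P S"
    show "P (\<Union>K)"
    proof (rule PI)
      show "\<Union>K \<subseteq> (\<Union>C\<in>?CL. XC Xw C)" using K PD1 by blast
    next
      fix C assume C: "C \<in> ?CL"
      have "\<Union>K \<inter> XC Xw C = (\<Union>S\<in>K. S \<inter> XC Xw C)" by blast
      moreover have "openin (T C) (\<Union>S\<in>K. S \<inter> XC Xw C)"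
        using K PD2[OF _ C] by (intro openin_Union) blast
      ultimately show "openin (T C) (\<Union>K \<inter> XC Xw C)" by simp
    next
      fix C C' assume C: "C\<in>?CL" "C'\<in>?CL" "\<Union>K \<inter> XC Xw C \<noteq> {}" "?up C C'"
      then obtain S where "S \<in> K" "S \<inter> XC Xw C \<noteq> {}" by blast
      then show "XC Xw C' \<subseteq> \<Union>K" using K PD3[OF _ C(1,2) _ C(4)] by blast
    qed
  qed
  have openXF: "openin (XF W R Xw T) = P"
    using istop unfolding XF_def P_def by simp
  define Ext where "Ext C V = V \<union> \<Union>{XC Xw D | D. D\<in>?CL \<and> ?up C D}" for C V
  have memExt: "\<And>C V p. p \<in> Ext C V \<longleftrightarrow> p \<in> V \<or> (\<exists>D\<in>?CL. ?up C D \<and> p \<in> XC Xw D)"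
    unfolding Ext_def by blast
  have XCd: "\<And>C D p. C\<in>?CL \<Longrightarrow> D\<in>?CL \<Longrightarrow> p \<in> XC Xw C \<Longrightarrow> p \<in> XC Xw D \<Longrightarrow> C = D"
    using XCdisj by blast
  have ExtC: "\<And>C V. C\<in>?CL \<Longrightarrow> openin (T C) V \<Longrightarrow> Ext C V \<inter> XC Xw C = V"
  proof -
    fix C V assume C: "C\<in>?CL" and V: "openin (T C) V"
    have Vs: "V \<subseteq> XC Xw C" using openin_subset[OF V] tsp[OF C] by simp
    show "Ext C V \<inter> XC Xw C = V"
    proof (intro equalityI subsetI)
      fix p assume "p \<in> Ext C V \<inter> XC Xw C"
      then show "p \<in> V" using memExt[of p C V] XCd[OF C] upirr by blast
    next
      fix p assume "p \<in> V" then show "p \<in> Ext C V \<inter> XC Xw C" using memExt Vs by blast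
    qed
  qed
  have ExtO: "\<And>C D V. C\<in>?CL \<Longrightarrow> D \<in> ?CL \<Longrightarrow> openin (T C) V \<Longrightarrow> D \<noteq> C \<Longrightarrow> \<not> ?up C D
     \<Longrightarrow> Ext C V \<inter> XC Xw D = {}"
  proof -
    fix C D V assume C: "C\<in>?CL" and D: "D \<in> ?CL" and V: "openin (T C) V" and ne: "D \<noteq> C"
      and nu: "\<not> ?up C D"
    have Vs: "V \<subseteq> XC Xw C" using openin_subset[OF V] tsp[OF C] by simp
    show "Ext C V \<inter> XC Xw D = {}"
    proof (rule equals0I)
      fix p assume p: "p \<in> Ext C V \<inter> XC Xw D"
      then have "p \<in> V \<or> (\<exists>E\<in>?CL. ?up C E \<and> p \<in> XC Xw E)" using memExt by blast
      then show False
      proof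
        assume "p \<in> V" then show False using Vs p XCd[OF C D] ne by blast
      next
        assume "\<exists>E\<in>?CL. ?up C E \<and> p \<in> XC Xw E"
        then obtain E where "E \<in> ?CL" "?up C E" "p \<in> XC Xw E" by blast
        then show False using p XCd[OF D] nu by blast
      qed
    qed
  qed
  have ExtU: "\<And>C D V. C\<in>?CL \<Longrightarrow> D \<in> ?CL \<Longrightarrow> ?up C D \<Longrightarrow> Ext C V \<inter> XC Xw D = XC Xw D"
    using memExt by blast
  have ExtOpen: "\<And>C V. C\<in>?CL \<Longrightarrow> openin (T C) V \<Longrightarrow> openin (XF W R Xw T) (Ext C V)"
  proof -
    fix C V assume C: "C\<in>?CL" and V: "openin (T C) V"
    have Vs: "V \<subseteq> XC Xw C" using openin_subset[OF V] tsp[OF C] by simp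
    show "openin (XF W R Xw T) (Ext C V)"
      unfolding openXF P_def
    proof (intro conjI ballI impI)
      show "Ext C V \<subseteq> (\<Union>C\<in>clusters W R. XC Xw C)" using Vs C unfolding Ext_def by blast
    next
      fix D assume D: "D \<in> ?CL"
      show "openin (T D) (Ext C V \<inter> XC Xw D)"
      proof (cases "D = C")
        case True then show ?thesis using ExtC C V by simp
      next
        case False
        show ?thesis
        proof (cases "?up C D")
          case True then show ?thesis using ExtU[OF C D] tsp[OF D] by (metis openin_topspace)
        next
          case False2: False
          then show ?thesis using ExtO[OF C D V False] by simp
        qed
      qed
    next
      fix D D' assume D: "D \<in> ?CL" and ne: "Ext C V \<inter> XC Xw D \<noteq> {}" and D': "D' \<in> ?CL"
        and u: "?up D D'"
      show "XC Xw D' \<subseteq> Ext C V"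
      proof (cases "D = C")
        case True then show ?thesis using u D' unfolding Ext_def by blast
      next
        case False
        then have "?up C D" using ExtO[OF C D V False] ne by blast
        then have "?up C D'" using uptrans D D' u by blast
        then show ?thesis using D' unfolding Ext_def by blast
      qed
    qed
  qed
  have topXF: "topspace (XF W R Xw T) = (\<Union>C\<in>?CL. XC Xw C)"
  proof
    show "topspace (XF W R Xw T) \<subseteq> (\<Union>C\<in>?CL. XC Xw C)"
      using openin_topspace[of "XF W R Xw T"] unfolding openXF P_def by blast
  next
    have "P (\<Union>C\<in>?CL. XC Xw C)" unfolding P_def
    proof (intro conjI ballI impI)
      fix C assume C: "C \<in> ?CL"
      have "(\<Union>C\<in>?CL. XC Xw C) \<inter> XC Xw C = topspace (T C)" using tsp[OF C] C by blast
      then show "openin (T C) ((\<Union>C\<in>?CL. XC Xw C) \<inter> XC Xw C)" by simp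
    qed blast+
    then show "(\<Union>C\<in>?CL. XC Xw C) \<subseteq> topspace (XF W R Xw T)"
      unfolding openXF[symmetric] by (rule openin_subset)
  qed
  show ?thesis unfolding TD_space_def
  proof
    fix x assume "x \<in> topspace (XF W R Xw T)"
    then obtain C where C: "C\<in>?CL" "x \<in> XC Xw C" using topXF by blast
    have "closedin (T C) (T C derived_set_of {x})"
      using assms(3) C tsp unfolding TD_space_def by blast
    hence U0: "openin (T C) (topspace (T C) - T C derived_set_of {x})" by (simp add: closedin_def)
    define U where "U = topspace (T C) - T C derived_set_of {x}"
    have xU0: "x \<in> U" unfolding U_def using C tsp[OF C(1)]
      by (auto simp: in_derived_set_of)
    show "closedin (XF W R Xw T) (XF W R Xw T derived_set_of {x})"
    proof (rule TD_point)
      show "openin (XF W R Xw T) (Ext C U)" using ExtOpen[OF C(1)] U0 U_def by simp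
      show "x \<in> Ext C U" using xU0 unfolding Ext_def by blast
      show "Ext C U \<inter> XF W R Xw T derived_set_of {x} = {}"
      proof (rule ccontr)
        assume "Ext C U \<inter> XF W R Xw T derived_set_of {x} \<noteq> {}"
        then obtain y where yE: "y \<in> Ext C U" and yd: "y \<in> XF W R Xw T derived_set_of {x}" by blast
        have yx: "y \<noteq> x" and yall: "\<And>S. y \<in> S \<Longrightarrow> openin (XF W R Xw T) S \<Longrightarrow> x \<in> S"
          using yd unfolding in_derived_set_of by auto
        show False
        proof (cases "y \<in> U")
          case True
          have "y \<in> T C derived_set_of {x}"
            unfolding in_derived_set_of
          proof (intro conjI allI impI)
            show "y \<in> topspace (T C)" using True U_def by blast
          next
            fix S assume "y \<in> S \<and> openin (T C) S"
            then have S: "y \<in> S" "openin (T C) S" by auto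
            have "y \<in> Ext C S" unfolding Ext_def using S by blast
            then have "x \<in> Ext C S" using yall ExtOpen[OF C(1) S(2)] by blast
            then have "x \<in> S" using ExtC[OF C(1) S(2)] C(2) by blast
            then show "\<exists>z\<noteq>y. z \<in> {x} \<and> z \<in> S" using yx by auto
          qed
          then show False using True U_def by blast
        next
          case False
          then obtain D where D: "D \<in> ?CL" "?up C D" "y \<in> XC Xw D"
            using yE unfolding Ext_def by blast
          have o: "openin (T D) (topspace (T D))" by simp
          have "y \<in> Ext D (topspace (T D))" using D tsp unfolding Ext_def by blast
          then have "x \<in> Ext D (topspace (T D))" using yall ExtOpen[OF D(1) o] by blast
          moreover have "C \<noteq> D" using D upirr by blast
          moreover have "\<not> ?up D C" using D upasym by blast
          ultimately show False using ExtO[OF D(1) C(1) o] C(2) by blast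
        qed
      qed
    qed
  qed
qed

end
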